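(* Let $u_0\in\ell^\infty_+(\mathbb{Z})$ with $\frac12\le u_0\le1$, let $\Psi_*$ be a creation operator with jump sequence $d\le L$, and $G_\beta(u)=\frac{\beta}{|\beta|}u^\beta$. 1. Let $\beta<0$ and let $u$ be a classical solution of $\partial_tu=\Delta G_\beta(u)$, $u(0)=\Psi_*u_0$, with $u\le1$ and $u(t,\cdot)\ge c(1\wedge t^{\frac1{1-\beta}})$ for all $t\ge0$, where $c>0$ depends only on $\beta,L$. Then for every $T>0$ there is $C=C(\beta,L,T)$ with $|u(t_2,k)-u(t_1,k)|\le C|t_2-t_1|^{\frac1{1-\beta}}$ for all $t_1,t_2\in[0,T]$, $k\in\mathbb{Z}$. 2. Let $\beta\in(0,1]$ and let $u$ be a classical solution of the same problem with $0\le u\le1$. Then $|u(t_2,k)-u(t_1,k)|\le4|t_2-t_1|$ for all $t_1,t_2\ge0$, $k\in\mathbb{Z}$.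
   Context: $\Delta v(k)=v(k-1)-2v(k)+v(k+1)$. Creation operator: for strictly increasing $\Psi:\mathbb{Z}\to\mathbb{Z}$, $\Psi_*x(\Psi(k))=x(k)$, $\Psi_*x(l)=0$ off $\Psi(\mathbb{Z})$; jump sequence = gaps $\Psi(k+1)-\Psi(k)-1$. Classical solution: $u\in C^0([0,\infty);\ell^\infty_+(\mathbb{Z}))$ with the initial datum, $u(\cdot,k)\in C^1((0,\infty))$ positive and satisfying the equation pointwise. *)

theory Defs
  imports "HOL-Analysis.Analysis"
begin

definition dlap :: "(int \<Rightarrow> real) \<Rightarrow> int \<Rightarrow> real" where
  "dlap v k = v (k - 1) - 2 * v k + v (k + 1)"

definition linf_plus :: "(int \<Rightarrow> real) set" where
  "linf_plus = {x. (\<exists>B. \<forall>k. \<bar>x k\<bar> \<le> B) \<and> (\<forall>k. 0 \<le> x k)}"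

text \<open>Creation operator: for strictly increasing Psi, (push Psi x)(Psi k) = x k, zero off the range.\<close>
definition push :: "(int \<Rightarrow> int) \<Rightarrow> (int \<Rightarrow> real) \<Rightarrow> int \<Rightarrow> real" where
  "push Psi x l = (if l \<in> range Psi then x (inv Psi l) else 0)"

definition jump :: "(int \<Rightarrow> int) \<Rightarrow> int \<Rightarrow> int" where
  "jump Psi k = Psi (k + 1) - Psi k - 1"

definition Gb :: "real \<Rightarrow> real \<Rightarrow> real" where
  "Gb beta s = (beta / \<bar>beta\<bar>) * s powr beta"

definition classical_solution :: "real \<Rightarrow> (int \<Rightarrow> real) \<Rightarrow> (real \<Rightarrow> int \<Rightarrow> real) \<Rightarrow> bool" where
  "classical_solution beta v0 u \<longleftrightarrow>
     (\<forall>t\<ge>0. u t \<in> linf_plus) \<and>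
     (\<forall>t\<ge>0. \<forall>e>0. \<exists>d>0. \<forall>s\<ge>0. \<bar>s - t\<bar> < d \<longrightarrow> (\<forall>k. \<bar>u s k - u t k\<bar> \<le> e)) \<and>
     u 0 = v0 \<and>
     (\<forall>k. \<exists>u'. continuous_on {0<..} u' \<and>
        (\<forall>t>0. ((\<lambda>s. u s k) has_real_derivative u' t) (at t) \<and>
               0 < u t k \<and>
               u' t = dlap (\<lambda>j. Gb beta (u t j)) k))"

end

theory Submission
  imports Defs
begin


lemma mono_bound:
  fixes f F f' F' :: "real \<Rightarrow> real"
  assumes ab: "0 \<le> a" "a \<le> b"
    and cf: "continuous_on {a..b} f" and cF: "continuous_on {a..b} F"
    and df: "\<And>t. t > 0 \<Longrightarrow> (f has_real_derivative f' t) (at t)"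
    and dF: "\<And>t. t > 0 \<Longrightarrow> (F has_real_derivative F' t) (at t)"
    and bd: "\<And>t. t > 0 \<Longrightarrow> \<bar>f' t\<bar> \<le> F' t"
  shows "\<bar>f b - f a\<bar> \<le> F b - F a"
proof (cases "a = b")
  case True then show ?thesis by simp
next
  case False
  hence lt: "a < b" using ab by simp
  have D1: "((\<lambda>t. f t - F t) has_real_derivative (f' x - F' x)) (at x)" if "0 < x" for x
    by (rule DERIV_diff[OF df[OF that] dF[OF that]])
  have D2: "((\<lambda>t. f t + F t) has_real_derivative (f' x + F' x)) (at x)" if "0 < x" for x
    by (rule DERIV_add[OF df[OF that] dF[OF that]])
  have d1: "(\<lambda>t. f t - F t) differentiable (at x)" if "a < x" for x
    using D1[of x] that ab unfolding real_differentiable_def by auto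
  have d2: "(\<lambda>t. f t + F t) differentiable (at x)" if "a < x" for x
    using D2[of x] that ab unfolding real_differentiable_def by auto
  obtain l z where z: "a < z" "z < b" "((\<lambda>t. f t - F t) has_real_derivative l) (at z)"
     "(f b - F b) - (f a - F a) = (b - a) * l"
    using MVT[OF lt continuous_on_diff[OF cf cF]] d1 by blast
  have "l = f' z - F' z" using z(1) ab by (intro DERIV_unique[OF z(3) D1]) simp
  hence l: "l \<le> 0" using bd[of z] z(1) ab by auto
  obtain l2 z2 where z2: "a < z2" "z2 < b" "((\<lambda>t. f t + F t) has_real_derivative l2) (at z2)"
     "(f b + F b) - (f a + F a) = (b - a) * l2"
    using MVT[OF lt continuous_on_add[OF cf cF]] d2 by blast
  have "l2 = f' z2 + F' z2" using z2(1) ab by (intro DERIV_unique[OF z2(3) D2]) simp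
  hence l2: "l2 \<ge> 0" using bd[of z2] z2(1) ab by auto
  have "(b - a) * l \<le> 0" using lt l by (simp add: mult_nonneg_nonpos)
  moreover have "(b - a) * l2 \<ge> 0" using lt l2 by simp
  ultimately show ?thesis using z(4) z2(4) by linarith
qed

lemma dlap_bound:
  assumes "\<And>j. a \<le> v j \<and> v j \<le> b"
  shows "\<bar>dlap v k\<bar> \<le> 2 * (b - a)"
  using assms[of "k-1"] assms[of k] assms[of "k+1"] unfolding dlap_def by auto

lemma cont_u:
  fixes u :: "real \<Rightarrow> int \<Rightarrow> real"
  assumes "\<forall>t\<ge>0. \<forall>e>0. \<exists>d>0. \<forall>s\<ge>0. \<bar>s - t\<bar> < d \<longrightarrow> (\<forall>k. \<bar>u s k - u t k\<bar> \<le> e)"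
  shows "continuous_on {0..} (\<lambda>s. u s k :: real)"
proof (rule continuous_on_iff[THEN iffD2], intro ballI allI impI)
  fix x e :: real assume x: "x \<in> {0..}" and e: "0 < e"
  obtain d where d: "d > 0" "\<forall>s\<ge>0. \<bar>s - x\<bar> < d \<longrightarrow> (\<forall>k. \<bar>u s k - u x k\<bar> \<le> e/2)"
    using assms x e by (meson atLeast_iff half_gt_zero)
  show "\<exists>d>0. \<forall>x'\<in>{0..}. dist x' x < d \<longrightarrow> dist (u x' k) (u x k) < e"
  proof (intro exI[of _ d] conjI ballI impI)
    fix x' :: real assume "x' \<in> {0..}" "dist x' x < d"
    hence "\<bar>u x' k - u x k\<bar> \<le> e/2" using d(2) by (auto simp: dist_real_def)
    thus "dist (u x' k) (u x k) < e" using e by (simp add: dist_real_def)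
  qed (rule d(1))
qed

lemma powr_subadd:
  fixes x y a :: real
  assumes "0 \<le> x" "0 \<le> y" "0 < a" "a \<le> 1"
  shows "(x + y) powr a \<le> x powr a + y powr a"
proof (cases "x + y = 0")
  case True then show ?thesis using assms by simp
next
  case False
  hence s: "x + y > 0" using assms by simp
  have p: "x / (x+y) \<le> (x/(x+y)) powr a"
  proof -
    have "0 \<le> x/(x+y)" using assms s by simp
    moreover have "x/(x+y) \<le> 1" using assms s by (simp add: divide_le_eq_1)
    moreover note h = powr_mono'[of a 1 "x/(x+y)"]
    ultimately show ?thesis using assms(4) powr_one by metis
  qed
  have q: "y / (x+y) \<le> (y/(x+y)) powr a"
  proof -
    have "0 \<le> y/(x+y)" using assms s by simp
    moreover have "y/(x+y) \<le> 1" using assms s by (simp add: divide_le_eq_1)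
    moreover note h = powr_mono'[of a 1 "y/(x+y)"]
    ultimately show ?thesis using assms(4) powr_one by metis
  qed
  have "1 = x/(x+y) + y/(x+y)" using s by (simp add: add_divide_distrib[symmetric])
  also have "\<dots> \<le> (x/(x+y)) powr a + (y/(x+y)) powr a" using p q by simp
  also have "\<dots> = (x powr a + y powr a) / (x+y) powr a"
    using assms s by (simp only: powr_divide add_divide_distrib)
  finally have "1 \<le> (x powr a + y powr a) / (x+y) powr a" .
  moreover have "(x+y) powr a > 0" using s by simp
  ultimately show ?thesis by (simp add: le_divide_eq_1_pos)
qed



lemma part1_core:
  fixes u :: "real \<Rightarrow> int \<Rightarrow> real" and beta c T a b :: real
  defines "\<alpha> \<equiv> 1 / (1 - beta)"
  defines "K \<equiv> 2 * c powr beta"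
  assumes beta: "beta < 0" and c: "c > 0" and T: "T > 0"
    and cs: "classical_solution beta v0 u"
    and up: "\<forall>t\<ge>0. \<forall>k. u t k \<le> 1"
    and lo: "\<forall>t\<ge>0. \<forall>k. c * min 1 (t powr \<alpha>) \<le> u t k"
    and ab: "0 \<le> a" "a \<le> b" "b \<le> T"
  shows "\<bar>u b k - u a k\<bar> \<le> (K * T powr (1 - \<alpha>) + K / \<alpha>) * (b - a) powr \<alpha>"
proof -
  have a0: "\<alpha> > 0" "\<alpha> \<le> 1" using beta unfolding \<alpha>_def by (auto simp: field_simps)
  have ab1: "\<alpha> * beta = \<alpha> - 1" using beta unfolding \<alpha>_def by (auto simp: field_simps)
  have K0: "K \<ge> 0" unfolding K_def by simp
  have cont: "\<forall>t\<ge>0. \<forall>e>0. \<exists>d>0. \<forall>s\<ge>0. \<bar>s - t\<bar> < d \<longrightarrow> (\<forall>k. \<bar>u s k - u t k\<bar> \<le> e)"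
    using cs unfolding classical_solution_def by blast
  obtain u' where u': "\<And>t. t > 0 \<Longrightarrow> ((\<lambda>s. u s k) has_real_derivative u' t) (at t)"
     "\<And>t. t > 0 \<Longrightarrow> u' t = dlap (\<lambda>j. Gb beta (u t j)) k"
    using cs unfolding classical_solution_def by metis
  define F where "F t = K * t + (K / \<alpha>) * t powr \<alpha>" for t
  define F' where "F' t = K * 1 + (K / \<alpha>) * (\<alpha> * t powr (\<alpha> - 1))" for t
  have cf: "continuous_on {a..b} (\<lambda>s. u s k)"
    using continuous_on_subset[OF cont_u[OF cont, of k]] ab by auto
  have cF: "continuous_on {a..b} F"
    unfolding F_def using ab a0
    by (intro continuous_on_add continuous_on_mult continuous_on_const continuous_on_id
        continuous_on_powr') auto
  have dF: "(F has_real_derivative F' t) (at t)" if "t > 0" for t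
    unfolding F_def[abs_def] F'_def
    by (intro DERIV_add DERIV_cmult DERIV_ident has_real_derivative_powr that)
  have bd: "\<bar>u' t\<bar> \<le> F' t" if t: "t > 0" for t
  proof -
    define m where "m = c * min 1 (t powr \<alpha>)"
    have m0: "m > 0" unfolding m_def using c t by simp
    have G: "Gb beta s = - (s powr beta)" for s
      unfolding Gb_def using beta by simp
    have vj: "- (m powr beta) \<le> Gb beta (u t j) \<and> Gb beta (u t j) \<le> 0" for j
    proof -
      have "m \<le> u t j" using lo t unfolding m_def by auto
      hence "u t j powr beta \<le> m powr beta" using powr_mono2'[of beta m "u t j"] beta m0 by simp
      thus ?thesis unfolding G by simp
    qed
    have "\<bar>u' t\<bar> \<le> 2 * (0 - - (m powr beta))"
      unfolding u'(2)[OF t] by (rule dlap_bound) (rule vj)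
    also have "\<dots> = K * (min 1 (t powr \<alpha>)) powr beta"
      unfolding m_def K_def by (simp add: powr_mult)
    also have "\<dots> \<le> K * (1 + t powr (\<alpha> - 1))"
    proof (rule mult_left_mono[OF _ K0])
      show "(min 1 (t powr \<alpha>)) powr beta \<le> 1 + t powr (\<alpha> - 1)"
      proof (cases "t \<le> 1")
        case True
        hence "t powr \<alpha> \<le> 1" using powr_le1[of \<alpha> t] a0 t by simp
        hence "min 1 (t powr \<alpha>) = t powr \<alpha>" by simp
        hence "(min 1 (t powr \<alpha>)) powr beta = t powr (\<alpha> - 1)"
          using ab1 by (simp add: powr_powr)
        thus ?thesis by simp
      next
        case False
        hence "t powr \<alpha> \<ge> 1" using ge_one_powr_ge_zero[of t \<alpha>] a0 by simp
        hence "min 1 (t powr \<alpha>) = 1" by simp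
        thus ?thesis by simp
      qed
    qed
    also have "\<dots> = F' t" unfolding F'_def using a0 by (simp add: field_simps)
    finally show ?thesis .
  qed
  have main: "\<bar>u b k - u a k\<bar> \<le> F b - F a"
    by (rule mono_bound[OF ab(1,2) cf cF u'(1) dF bd])
  have sub: "b powr \<alpha> \<le> a powr \<alpha> + (b - a) powr \<alpha>"
    using powr_subadd[of a "b - a" \<alpha>] ab a0 by simp
  have lin: "b - a \<le> T powr (1 - \<alpha>) * (b - a) powr \<alpha>"
  proof (cases "a = b")
    case True then show ?thesis by simp
  next
    case False
    hence d: "b - a > 0" using ab by simp
    have "b - a = (b - a) powr (1 - \<alpha>) * (b - a) powr \<alpha>"
      using d by (simp add: powr_add[symmetric])
    also have "\<dots> \<le> T powr (1 - \<alpha>) * (b - a) powr \<alpha>"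
      using d ab a0 by (intro mult_right_mono powr_mono2) auto
    finally show ?thesis .
  qed
  have "F b - F a = K * (b - a) + (K / \<alpha>) * (b powr \<alpha> - a powr \<alpha>)"
    unfolding F_def by (simp add: algebra_simps)
  also have "\<dots> \<le> K * (T powr (1 - \<alpha>) * (b - a) powr \<alpha>) + (K / \<alpha>) * ((b - a) powr \<alpha>)"
    using K0 a0 sub lin by (intro add_mono mult_left_mono) auto
  also have "\<dots> = (K * T powr (1 - \<alpha>) + K / \<alpha>) * (b - a) powr \<alpha>"
    by (simp add: algebra_simps)
  finally show ?thesis using main by linarith
qed

lemma part2_core:
  fixes u :: "real \<Rightarrow> int \<Rightarrow> real" and beta a b :: real
  assumes beta: "beta > 0"
    and cs: "classical_solution beta v0 u"
    and bnd: "\<forall>t\<ge>0. \<forall>k. 0 \<le> u t k \<and> u t k \<le> 1"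
    and ab: "0 \<le> a" "a \<le> b"
  shows "\<bar>u b k - u a k\<bar> \<le> 2 * (b - a)"
proof -
  have cont: "\<forall>t\<ge>0. \<forall>e>0. \<exists>d>0. \<forall>s\<ge>0. \<bar>s - t\<bar> < d \<longrightarrow> (\<forall>k. \<bar>u s k - u t k\<bar> \<le> e)"
    using cs unfolding classical_solution_def by blast
  obtain u' where u': "\<And>t. t > 0 \<Longrightarrow> ((\<lambda>s. u s k) has_real_derivative u' t) (at t)"
     "\<And>t. t > 0 \<Longrightarrow> u' t = dlap (\<lambda>j. Gb beta (u t j)) k"
    using cs unfolding classical_solution_def by metis
  have cf: "continuous_on {a..b} (\<lambda>s. u s k)"
    using continuous_on_subset[OF cont_u[OF cont, of k]] ab by auto
  have cF: "continuous_on {a..b} (\<lambda>t. 2 * t)"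
    by (intro continuous_on_mult continuous_on_const continuous_on_id)
  have dF: "((\<lambda>t. 2 * t) has_real_derivative 2 * 1) (at t)" for t
    by (intro DERIV_cmult DERIV_ident)
  have bd: "\<bar>u' t\<bar> \<le> 2 * 1" if t: "t > 0" for t
  proof -
    have G: "Gb beta s = s powr beta" for s
      unfolding Gb_def using beta by simp
    have vj: "0 \<le> Gb beta (u t j) \<and> Gb beta (u t j) \<le> 1" for j
      unfolding G using bnd t beta by (auto intro!: powr_le1)
    have "\<bar>u' t\<bar> \<le> 2 * (1 - 0)"
      unfolding u'(2)[OF t] by (rule dlap_bound) (rule vj)
    thus ?thesis by simp
  qed
  have "\<bar>u b k - u a k\<bar> \<le> 2 * b - 2 * a"
    by (rule mono_bound[OF ab(1,2) cf cF u'(1) dF bd])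
  thus ?thesis by simp
qed

theorem lemma4p4:
  shows
  "(\<forall>beta L c T. beta < 0 \<longrightarrow> c > 0 \<longrightarrow> T > 0 \<longrightarrow>
      (\<exists>C. \<forall>(u0 :: int \<Rightarrow> real) (Psi :: int \<Rightarrow> int) (u :: real \<Rightarrow> int \<Rightarrow> real).
         u0 \<in> linf_plus \<longrightarrow> (\<forall>k. 1/2 \<le> u0 k \<and> u0 k \<le> 1) \<longrightarrow>
         strict_mono Psi \<longrightarrow> (\<forall>k. real_of_int (jump Psi k) \<le> L) \<longrightarrow>
         classical_solution beta (push Psi u0) u \<longrightarrow>
         (\<forall>t\<ge>0. \<forall>k. u t k \<le> 1) \<longrightarrow>
         (\<forall>t\<ge>0. \<forall>k. c * min 1 (t powr (1 / (1 - beta))) \<le> u t k) \<longrightarrow>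
         (\<forall>t1 t2 k. 0 \<le> t1 \<longrightarrow> t1 \<le> T \<longrightarrow> 0 \<le> t2 \<longrightarrow> t2 \<le> T \<longrightarrow>
            \<bar>u t2 k - u t1 k\<bar> \<le> C * \<bar>t2 - t1\<bar> powr (1 / (1 - beta)))))
   \<and>
   (\<forall>beta L (u0 :: int \<Rightarrow> real) (Psi :: int \<Rightarrow> int) (u :: real \<Rightarrow> int \<Rightarrow> real).
      0 < beta \<longrightarrow> beta \<le> 1 \<longrightarrow>
      u0 \<in> linf_plus \<longrightarrow> (\<forall>k. 1/2 \<le> u0 k \<and> u0 k \<le> 1) \<longrightarrow>
      strict_mono Psi \<longrightarrow> (\<forall>k. real_of_int (jump Psi k) \<le> L) \<longrightarrow>
      classical_solution beta (push Psi u0) u \<longrightarrow>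
      (\<forall>t\<ge>0. \<forall>k. 0 \<le> u t k \<and> u t k \<le> 1) \<longrightarrow>
      (\<forall>t1 t2 k. 0 \<le> t1 \<longrightarrow> 0 \<le> t2 \<longrightarrow> \<bar>u t2 k - u t1 k\<bar> \<le> 4 * \<bar>t2 - t1\<bar>))"
  proof (intro conjI allI impI)
  fix beta L c T :: real
  assume beta: "beta < 0" and c: "c > 0" and T: "T > 0"
  define \<alpha> where "\<alpha> = 1 / (1 - beta)"
  define K where "K = 2 * c powr beta"
  show "\<exists>C. \<forall>(u0 :: int \<Rightarrow> real) (Psi :: int \<Rightarrow> int) (u :: real \<Rightarrow> int \<Rightarrow> real).
         u0 \<in> linf_plus \<longrightarrow> (\<forall>k. 1/2 \<le> u0 k \<and> u0 k \<le> 1) \<longrightarrow>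
         strict_mono Psi \<longrightarrow> (\<forall>k. real_of_int (jump Psi k) \<le> L) \<longrightarrow>
         classical_solution beta (push Psi u0) u \<longrightarrow>
         (\<forall>t\<ge>0. \<forall>k. u t k \<le> 1) \<longrightarrow>
         (\<forall>t\<ge>0. \<forall>k. c * min 1 (t powr (1 / (1 - beta))) \<le> u t k) \<longrightarrow>
         (\<forall>t1 t2 k. 0 \<le> t1 \<longrightarrow> t1 \<le> T \<longrightarrow> 0 \<le> t2 \<longrightarrow> t2 \<le> T \<longrightarrow>
            \<bar>u t2 k - u t1 k\<bar> \<le> C * \<bar>t2 - t1\<bar> powr (1 / (1 - beta)))"
  proof (rule exI[of _ "K * T powr (1 - \<alpha>) + K / \<alpha>"], intro allI impI)
    fix u0 :: "int \<Rightarrow> real" and Psi :: "int \<Rightarrow> int" and u :: "real \<Rightarrow> int \<Rightarrow> real"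
    fix t1 t2 :: real and k :: int
    assume cs: "classical_solution beta (push Psi u0) u"
      and up: "\<forall>t\<ge>0. \<forall>k. u t k \<le> 1"
      and lo: "\<forall>t\<ge>0. \<forall>k. c * min 1 (t powr (1 / (1 - beta))) \<le> u t k"
      and t: "0 \<le> t1" "t1 \<le> T" "0 \<le> t2" "t2 \<le> T"
    note core = part1_core[OF beta c T cs up lo]
    show "\<bar>u t2 k - u t1 k\<bar> \<le> (K * T powr (1 - \<alpha>) + K / \<alpha>) * \<bar>t2 - t1\<bar> powr (1 / (1 - beta))"
    proof (cases "t1 \<le> t2")
      case True
      thus ?thesis using core[of t1 t2 k] t unfolding \<alpha>_def K_def by simp
    next
      case False
      thus ?thesis using core[of t2 t1 k] t unfolding \<alpha>_def K_def by (simp add: abs_minus_commute)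
    qed
  qed
next
  fix beta L :: real and u0 :: "int \<Rightarrow> real" and Psi :: "int \<Rightarrow> int" and u :: "real \<Rightarrow> int \<Rightarrow> real"
  fix t1 t2 :: real and k :: int
  assume beta: "0 < beta" and cs: "classical_solution beta (push Psi u0) u"
    and bnd: "\<forall>t\<ge>0. \<forall>k. 0 \<le> u t k \<and> u t k \<le> 1"
    and t: "0 \<le> t1" "0 \<le> t2"
  show "\<bar>u t2 k - u t1 k\<bar> \<le> 4 * \<bar>t2 - t1\<bar>"
  proof (cases "t1 \<le> t2")
    case True
    thus ?thesis using part2_core[OF beta cs bnd, of t1 t2 k] t by simp
  next
    case False
    thus ?thesis using part2_core[OF beta cs bnd, of t2 t1 k] t by (simp add: abs_minus_commute)
  qed
qed

end
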